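(* Let $M,N$ be $L$-structures with $M\equiv N$ (affine elementary equivalence), and assume both are $\aleph_0$-saturated in the affine sense. Then $M$ and $N$ are elementarily equivalent in full continuous logic, i.e. they assign the same value to every CL-sentence.
   Context: Affine continuous logic over a Lipschitz language $L$: structures are complete metric spaces of diameter $\le1$ with Lipschitz interpretations; affine formulas are built from atomic $1,d(t_1,t_2),R(\bar t)$ by $+$, real scalars, $\sup$, $\inf$; CL-formulas additionally allow the connectives $\wedge$ (min) and $\vee$ (max). $M\equiv N$ means $\sigma^M=\sigma^N$ for all affine sentences. For $A\subseteq M$, a type over $A$ is a positive linear functional $p$ with $p(1)=1$ on the space of affine formulas $\phi(\bar x)$ with parameters from $A$, identified when they take the same values on $M$; $\bar b$ realizes $p$ if $p(\phi)=\phi^M(\bar b)$ for all such $\phi$. $M$ is $\aleph_0$-saturated if for every finite $A\subseteq M$ every 1-type over $A$ is realized in $M$. *)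

theory Defs
  imports "HOL-Analysis.Analysis"
begin

text \<open>A Lipschitz language: function symbols of type 'f and relation symbols of
type 'r, each with an arity and a Lipschitz constant (w.r.t. the max metric on
finite powers).\<close>

record ('f, 'r) lang =
  farity :: "'f \<Rightarrow> nat"
  flip   :: "'f \<Rightarrow> real"
  rarity :: "'r \<Rightarrow> nat"
  rlip   :: "'r \<Rightarrow> real"

record ('a, 'f, 'r) struc =
  funs :: "'f \<Rightarrow> 'a list \<Rightarrow> 'a"
  rels :: "'r \<Rightarrow> 'a list \<Rightarrow> real"

definition maxdist :: "'a::metric_space list \<Rightarrow> 'a list \<Rightarrow> real" where
  "maxdist xs ys = foldr max (map (\<lambda>(x, y). dist x y) (zip xs ys)) 0"

definition is_structure :: "('f, 'r) lang \<Rightarrow> ('a::complete_space, 'f, 'r) struc \<Rightarrow> bool" where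
  "is_structure L M \<longleftrightarrow>
     (\<forall>x y :: 'a. dist x y \<le> 1) \<and>
     (\<forall>f xs ys. length xs = farity L f \<and> length ys = farity L f \<longrightarrow>
        dist (funs M f xs) (funs M f ys) \<le> flip L f * maxdist xs ys) \<and>
     (\<forall>R xs ys. length xs = rarity L R \<and> length ys = rarity L R \<longrightarrow>
        \<bar>rels M R xs - rels M R ys\<bar> \<le> rlip L R * maxdist xs ys)"

datatype 'f trm = Var nat | Fn 'f "'f trm list"

text \<open>CL-formulas: affine formulas plus min (\<and>) and max (\<or>).\<close>

datatype ('f, 'r) fml =
    One
  | Dist "'f trm" "'f trm"
  | Rel 'r "'f trm list"
  | Plus "('f, 'r) fml" "('f, 'r) fml"
  | Scal real "('f, 'r) fml"
  | Sup nat "('f, 'r) fml"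
  | Inf nat "('f, 'r) fml"
  | Min "('f, 'r) fml" "('f, 'r) fml"
  | Max "('f, 'r) fml" "('f, 'r) fml"

fun wf_trm :: "('f, 'r) lang \<Rightarrow> 'f trm \<Rightarrow> bool" where
  "wf_trm L (Var v) = True"
| "wf_trm L (Fn f ts) = (length ts = farity L f \<and> (\<forall>t\<in>set ts. wf_trm L t))"

fun wf_fml :: "('f, 'r) lang \<Rightarrow> ('f, 'r) fml \<Rightarrow> bool" where
  "wf_fml L One = True"
| "wf_fml L (Dist s t) = (wf_trm L s \<and> wf_trm L t)"
| "wf_fml L (Rel R ts) = (length ts = rarity L R \<and> (\<forall>t\<in>set ts. wf_trm L t))"
| "wf_fml L (Plus \<phi> \<psi>) = (wf_fml L \<phi> \<and> wf_fml L \<psi>)"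
| "wf_fml L (Scal c \<phi>) = wf_fml L \<phi>"
| "wf_fml L (Sup x \<phi>) = wf_fml L \<phi>"
| "wf_fml L (Inf x \<phi>) = wf_fml L \<phi>"
| "wf_fml L (Min \<phi> \<psi>) = (wf_fml L \<phi> \<and> wf_fml L \<psi>)"
| "wf_fml L (Max \<phi> \<psi>) = (wf_fml L \<phi> \<and> wf_fml L \<psi>)"

fun affine :: "('f, 'r) fml \<Rightarrow> bool" where
  "affine One = True"
| "affine (Dist s t) = True"
| "affine (Rel R ts) = True"
| "affine (Plus \<phi> \<psi>) = (affine \<phi> \<and> affine \<psi>)"
| "affine (Scal c \<phi>) = affine \<phi>"
| "affine (Sup x \<phi>) = affine \<phi>"
| "affine (Inf x \<phi>) = affine \<phi>"
| "affine (Min \<phi> \<psi>) = False"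
| "affine (Max \<phi> \<psi>) = False"

fun fv_trm :: "'f trm \<Rightarrow> nat set" where
  "fv_trm (Var v) = {v}"
| "fv_trm (Fn f ts) = (\<Union>t\<in>set ts. fv_trm t)"

fun fv :: "('f, 'r) fml \<Rightarrow> nat set" where
  "fv One = {}"
| "fv (Dist s t) = fv_trm s \<union> fv_trm t"
| "fv (Rel R ts) = (\<Union>t\<in>set ts. fv_trm t)"
| "fv (Plus \<phi> \<psi>) = fv \<phi> \<union> fv \<psi>"
| "fv (Scal c \<phi>) = fv \<phi>"
| "fv (Sup x \<phi>) = fv \<phi> - {x}"
| "fv (Inf x \<phi>) = fv \<phi> - {x}"
| "fv (Min \<phi> \<psi>) = fv \<phi> \<union> fv \<psi>"
| "fv (Max \<phi> \<psi>) = fv \<phi> \<union> fv \<psi>"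

definition sentence :: "('f, 'r) lang \<Rightarrow> ('f, 'r) fml \<Rightarrow> bool" where
  "sentence L \<phi> \<longleftrightarrow> wf_fml L \<phi> \<and> fv \<phi> = {}"

fun eval_trm :: "('a, 'f, 'r) struc \<Rightarrow> (nat \<Rightarrow> 'a) \<Rightarrow> 'f trm \<Rightarrow> 'a" where
  "eval_trm M e (Var v) = e v"
| "eval_trm M e (Fn f ts) = funs M f (map (eval_trm M e) ts)"

fun eval :: "('a::metric_space, 'f, 'r) struc \<Rightarrow> (nat \<Rightarrow> 'a) \<Rightarrow> ('f, 'r) fml \<Rightarrow> real" where
  "eval M e One = 1"
| "eval M e (Dist s t) = dist (eval_trm M e s) (eval_trm M e t)"
| "eval M e (Rel R ts) = rels M R (map (eval_trm M e) ts)"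
| "eval M e (Plus \<phi> \<psi>) = eval M e \<phi> + eval M e \<psi>"
| "eval M e (Scal c \<phi>) = c * eval M e \<phi>"
| "eval M e (Sup x \<phi>) = (SUP a. eval M (e(x := a)) \<phi>)"
| "eval M e (Inf x \<phi>) = (INF a. eval M (e(x := a)) \<phi>)"
| "eval M e (Min \<phi> \<psi>) = min (eval M e \<phi>) (eval M e \<psi>)"
| "eval M e (Max \<phi> \<psi>) = max (eval M e \<phi>) (eval M e \<psi>)"

text \<open>Value of a sentence (independent of the assignment).\<close>

definition sval :: "('a::metric_space, 'f, 'r) struc \<Rightarrow> ('f, 'r) fml \<Rightarrow> real" where
  "sval M \<sigma> = eval M (\<lambda>_. undefined) \<sigma>"

definition affine_equiv ::
  "('f, 'r) lang \<Rightarrow> ('a::metric_space, 'f, 'r) struc \<Rightarrow> ('b::metric_space, 'f, 'r) struc \<Rightarrow> bool" where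
  "affine_equiv L M N \<longleftrightarrow>
     (\<forall>\<sigma>. sentence L \<sigma> \<and> affine \<sigma> \<longrightarrow> sval M \<sigma> = sval N \<sigma>)"

definition CL_equiv ::
  "('f, 'r) lang \<Rightarrow> ('a::metric_space, 'f, 'r) struc \<Rightarrow> ('b::metric_space, 'f, 'r) struc \<Rightarrow> bool" where
  "CL_equiv L M N \<longleftrightarrow>
     (\<forall>\<sigma>. sentence L \<sigma> \<longrightarrow> sval M \<sigma> = sval N \<sigma>)"

text \<open>The affine formulas \<phi>(x) in the single variable x (= Var 0) with parameters from A,
represented by the functions they define on M (so formulas taking the same values on M
are identified). The remaining free variables are assigned parameters in A by e.\<close>

definition affine_defs1 :: "('f, 'r) lang \<Rightarrow> ('a::metric_space, 'f, 'r) struc \<Rightarrow> 'a set \<Rightarrow> ('a \<Rightarrow> real) set" where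
  "affine_defs1 L M A =
     {(\<lambda>b. eval M (e(0 := b)) \<phi>) | \<phi> e.
        wf_fml L \<phi> \<and> affine \<phi> \<and> (\<forall>v\<in>fv \<phi>. v \<noteq> 0 \<longrightarrow> e v \<in> A)}"

definition affine_type1 :: "('f, 'r) lang \<Rightarrow> ('a::metric_space, 'f, 'r) struc \<Rightarrow> 'a set \<Rightarrow> (('a \<Rightarrow> real) \<Rightarrow> real) \<Rightarrow> bool" where
  "affine_type1 L M A p \<longleftrightarrow>
     (\<forall>f\<in>affine_defs1 L M A. \<forall>g\<in>affine_defs1 L M A. p (\<lambda>b. f b + g b) = p f + p g) \<and>
     (\<forall>f\<in>affine_defs1 L M A. \<forall>c. p (\<lambda>b. c * f b) = c * p f) \<and>
     (\<forall>f\<in>affine_defs1 L M A. (\<forall>b. 0 \<le> f b) \<longrightarrow> 0 \<le> p f) \<and>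
     p (\<lambda>b. 1) = 1"

definition realizes1 :: "('f, 'r) lang \<Rightarrow> ('a::metric_space, 'f, 'r) struc \<Rightarrow> 'a set \<Rightarrow> (('a \<Rightarrow> real) \<Rightarrow> real) \<Rightarrow> 'a \<Rightarrow> bool" where
  "realizes1 L M A p b \<longleftrightarrow> (\<forall>f\<in>affine_defs1 L M A. p f = f b)"

definition aleph0_saturated :: "('f, 'r) lang \<Rightarrow> ('a::metric_space, 'f, 'r) struc \<Rightarrow> bool" where
  "aleph0_saturated L M \<longleftrightarrow>
     (\<forall>A p. finite A \<and> affine_type1 L M A p \<longrightarrow> (\<exists>b. realizes1 L M A p b))"

end

theory Submission
  imports Defs
begin

primrec subst_trm :: "(nat \<Rightarrow> nat) \<Rightarrow> 'f trm \<Rightarrow> 'f trm" where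
  "subst_trm s (Var v) = Var (s v)"
| "subst_trm s (Fn f ts) = Fn f (map (subst_trm s) ts)"

definition fresh :: "nat set \<Rightarrow> nat" where "fresh S = (SOME y. y \<notin> S)"

lemma fresh: "finite S \<Longrightarrow> fresh S \<notin> S"
  unfolding fresh_def by (metis ex_new_if_finite infinite_UNIV_nat someI_ex)

primrec subst :: "(nat \<Rightarrow> nat) \<Rightarrow> ('f, 'r) fml \<Rightarrow> ('f, 'r) fml" where
  "subst s One = One"
| "subst s (Dist a b) = Dist (subst_trm s a) (subst_trm s b)"
| "subst s (Rel R ts) = Rel R (map (subst_trm s) ts)"
| "subst s (Plus a b) = Plus (subst s a) (subst s b)"
| "subst s (Scal c a) = Scal c (subst s a)"
| "subst s (Sup x a) = Sup (fresh (s ` (fv a - {x}))) (subst (s(x := fresh (s ` (fv a - {x})))) a)"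
| "subst s (Inf x a) = Inf (fresh (s ` (fv a - {x}))) (subst (s(x := fresh (s ` (fv a - {x})))) a)"
| "subst s (Min a b) = Min (subst s a) (subst s b)"
| "subst s (Max a b) = Max (subst s a) (subst s b)"

lemma eval_trm_subst: "eval_trm M e (subst_trm s t) = eval_trm M (e \<circ> s) t"
  by (induction t) (simp_all add: comp_def cong: map_cong)

lemma fv_trm_subst: "fv_trm (subst_trm s t) = s ` fv_trm t"
  by (induction t) auto

lemma wf_trm_subst: "wf_trm L (subst_trm s t) = wf_trm L t"
  by (induction t) auto

lemma eval_trm_agree: "(\<forall>v\<in>fv_trm t. e1 v = e2 v) \<Longrightarrow> eval_trm M e1 t = eval_trm M e2 t"
  by (induction t) (auto cong: map_cong)

lemma finite_fv_trm: "finite (fv_trm t)"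
  by (induction t) auto

lemma finite_fv: "finite (fv \<phi>)"
  by (induction \<phi>) (auto simp: finite_fv_trm)

lemma eval_agree: "(\<forall>v\<in>fv \<phi>. e1 v = e2 v) \<Longrightarrow> eval M e1 \<phi> = eval M e2 \<phi>"
proof (induction \<phi> arbitrary: e1 e2)
  case (Dist s t) then show ?case using eval_trm_agree[of s e1 e2 M] eval_trm_agree[of t e1 e2 M] by simp
next
  case (Rel R ts)
  have "map (eval_trm M e1) ts = map (eval_trm M e2) ts"
  proof (rule map_cong)
    fix t assume "t \<in> set ts"
    then show "eval_trm M e1 t = eval_trm M e2 t" using Rel eval_trm_agree[of t e1 e2 M] by auto
  qed simp
  then show ?case by (simp only: eval.simps)
next
  case (Sup x \<phi>)
  have "\<And>a. eval M (e1(x:=a)) \<phi> = eval M (e2(x:=a)) \<phi>" using Sup by auto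
  then show ?case by simp
next
  case (Inf x \<phi>)
  have "\<And>a. eval M (e1(x:=a)) \<phi> = eval M (e2(x:=a)) \<phi>" using Inf by auto
  then show ?case by simp
qed (simp_all, (metis Un_iff)+)

lemma eval_subst: "eval M e (subst s \<phi>) = eval M (e \<circ> s) \<phi>"
proof (induction \<phi> arbitrary: s e)
  case (Dist a b) then show ?case by (simp add: eval_trm_subst comp_def)
next
  case (Rel R ts) then show ?case by (simp add: eval_trm_subst comp_def)
next
  case (Sup x \<phi>)
  define y where "y = fresh (s ` (fv \<phi> - {x}))"
  have y: "y \<notin> s ` (fv \<phi> - {x})" unfolding y_def by (rule fresh) (simp add: finite_fv)
  have "\<And>a. eval M (e(y:=a)) (subst (s(x:=y)) \<phi>) = eval M ((e \<circ> s)(x:=a)) \<phi>"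
  proof -
    fix a
    have "eval M (e(y:=a)) (subst (s(x:=y)) \<phi>) = eval M ((e(y:=a)) \<circ> (s(x:=y))) \<phi>" by (rule Sup.IH)
    also have "\<dots> = eval M ((e \<circ> s)(x:=a)) \<phi>"
      by (rule eval_agree) (use y in auto)
    finally show "eval M (e(y:=a)) (subst (s(x:=y)) \<phi>) = eval M ((e \<circ> s)(x:=a)) \<phi>" .
  qed
  then show ?case by (simp add: y_def[symmetric] comp_def)
next
  case (Inf x \<phi>)
  define y where "y = fresh (s ` (fv \<phi> - {x}))"
  have y: "y \<notin> s ` (fv \<phi> - {x})" unfolding y_def by (rule fresh) (simp add: finite_fv)
  have "\<And>a. eval M (e(y:=a)) (subst (s(x:=y)) \<phi>) = eval M ((e \<circ> s)(x:=a)) \<phi>"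
  proof -
    fix a
    have "eval M (e(y:=a)) (subst (s(x:=y)) \<phi>) = eval M ((e(y:=a)) \<circ> (s(x:=y))) \<phi>" by (rule Inf.IH)
    also have "\<dots> = eval M ((e \<circ> s)(x:=a)) \<phi>"
      by (rule eval_agree) (use y in auto)
    finally show "eval M (e(y:=a)) (subst (s(x:=y)) \<phi>) = eval M ((e \<circ> s)(x:=a)) \<phi>" .
  qed
  then show ?case by (simp add: y_def[symmetric] comp_def)
qed auto

lemma fv_subst: "fv (subst s \<phi>) \<subseteq> s ` fv \<phi>"
proof (induction \<phi> arbitrary: s)
  case (Sup x \<phi>)
  define y where "y = fresh (s ` (fv \<phi> - {x}))"
  have "fv (subst (s(x:=y)) \<phi>) \<subseteq> (s(x:=y)) ` fv \<phi>" by (rule Sup.IH)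
  then have "fv (subst (s(x:=y)) \<phi>) - {y} \<subseteq> s ` (fv \<phi> - {x})" by auto
  then show ?case by (simp add: y_def[symmetric])
next
  case (Inf x \<phi>)
  define y where "y = fresh (s ` (fv \<phi> - {x}))"
  have "fv (subst (s(x:=y)) \<phi>) \<subseteq> (s(x:=y)) ` fv \<phi>" by (rule Inf.IH)
  then have "fv (subst (s(x:=y)) \<phi>) - {y} \<subseteq> s ` (fv \<phi> - {x})" by auto
  then show ?case by (simp add: y_def[symmetric])
qed (fastforce simp: fv_trm_subst)+

lemma wf_subst: "wf_fml L (subst s \<phi>) = wf_fml L \<phi>"
  by (induction \<phi> arbitrary: s) (auto simp: wf_trm_subst)

lemma affine_subst: "affine (subst s \<phi>) = affine \<phi>"
  by (induction \<phi> arbitrary: s) auto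

lemma maxdist_bounds:
  assumes "\<forall>x y::'a::metric_space. dist x y \<le> 1"
  shows "0 \<le> maxdist xs ys \<and> maxdist (xs::'a list) ys \<le> 1"
  unfolding maxdist_def
proof (induction xs arbitrary: ys)
  case (Cons x xs)
  then show ?case using assms by (cases ys) (auto simp: le_max_iff_disj)
qed simp


lemma bounded_eval:
  fixes M :: "('a::complete_space, 'f, 'r) struc"
  assumes S: "is_structure L M" and "wf_fml L \<phi>"
  shows "\<exists>B. \<forall>e. \<bar>eval M e \<phi>\<bar> \<le> B"
  using assms(2)
proof (induction \<phi>)
  case One then show ?case by auto
next
  case (Dist s t)
  have "\<forall>x y::'a. dist x y \<le> 1" using S unfolding is_structure_def by blast
  then show ?case by (intro exI[of _ 1]) auto
next
  case (Rel R ts)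
  define ys where "ys = (replicate (rarity L R) undefined :: 'a list)"
  have d1: "\<forall>x y::'a. dist x y \<le> 1" using S unfolding is_structure_def by blast
  have lip: "\<forall>xs ys. length xs = rarity L R \<and> length ys = rarity L R \<longrightarrow>
        \<bar>rels M R xs - rels M R ys\<bar> \<le> rlip L R * maxdist xs ys"
    using S unfolding is_structure_def by blast
  show ?case
  proof (intro exI allI)
    fix e
    define xs where "xs = map (eval_trm M e) ts"
    have l: "length xs = rarity L R" "length ys = rarity L R" using Rel by (auto simp: xs_def ys_def)
    have m: "0 \<le> maxdist xs ys" "maxdist xs ys \<le> 1" using maxdist_bounds[OF d1] by auto
    have "\<bar>rels M R xs - rels M R ys\<bar> \<le> rlip L R * maxdist xs ys" using lip l by blast
    also have "\<dots> \<le> \<bar>rlip L R\<bar> * maxdist xs ys" using m by (intro mult_right_mono) auto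
    also have "\<dots> \<le> \<bar>rlip L R\<bar>" using m by (simp add: mult_left_le)
    finally have "\<bar>rels M R xs\<bar> \<le> \<bar>rels M R ys\<bar> + \<bar>rlip L R\<bar>" by linarith
    then show "\<bar>eval M e (Rel R ts)\<bar> \<le> \<bar>rels M R ys\<bar> + \<bar>rlip L R\<bar>" by (simp add: xs_def)
  qed
next
  case (Plus a b)
  then obtain B1 B2 where "\<forall>e. \<bar>eval M e a\<bar> \<le> B1" "\<forall>e. \<bar>eval M e b\<bar> \<le> B2" by auto
  then show ?case by (intro exI[of _ "B1 + B2"]) (auto intro: order_trans[OF abs_triangle_ineq] add_mono)
next
  case (Scal c a)
  then obtain B where B: "\<forall>e. \<bar>eval M e a\<bar> \<le> B" by auto
  show ?case
  proof (intro exI allI)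
    fix e show "\<bar>eval M e (Scal c a)\<bar> \<le> \<bar>c\<bar> * B" using B by (simp add: abs_mult mult_left_mono)
  qed
next
  case (Min a b)
  then obtain B1 B2 where "\<forall>e. \<bar>eval M e a\<bar> \<le> B1" "\<forall>e. \<bar>eval M e b\<bar> \<le> B2" by auto
  then have H: "\<forall>e. \<bar>eval M e a\<bar> \<le> B1 \<and> \<bar>eval M e b\<bar> \<le> B2" by blast
  show ?case
  proof (intro exI allI)
    fix e
    have "\<bar>eval M e a\<bar> \<le> B1" "\<bar>eval M e b\<bar> \<le> B2" using H by auto
    then show "\<bar>eval M e (Min a b)\<bar> \<le> B1 + B2" by (auto simp: abs_le_iff min_def)
  qed
next
  case (Max a b)
  then obtain B1 B2 where "\<forall>e. \<bar>eval M e a\<bar> \<le> B1" "\<forall>e. \<bar>eval M e b\<bar> \<le> B2" by auto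
  then have H: "\<forall>e. \<bar>eval M e a\<bar> \<le> B1 \<and> \<bar>eval M e b\<bar> \<le> B2" by blast
  show ?case
  proof (intro exI allI)
    fix e
    have "\<bar>eval M e a\<bar> \<le> B1" "\<bar>eval M e b\<bar> \<le> B2" using H by auto
    then show "\<bar>eval M e (Max a b)\<bar> \<le> B1 + B2" by (auto simp: abs_le_iff max_def)
  qed
next
  case (Sup x a)
  then obtain B where B: "\<forall>e. \<bar>eval M e a\<bar> \<le> B" by auto
  show ?case
  proof (intro exI allI)
    fix e
    have bd: "bdd_above (range (\<lambda>c. eval M (e(x:=c)) a))"
      using B by (intro bdd_aboveI[of _ B]) (auto simp: abs_le_iff minus_le_iff)
    have 1: "(SUP c. eval M (e(x:=c)) a) \<le> B"
      using B by (intro cSUP_least) (auto simp: abs_le_iff minus_le_iff)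
    have "-B \<le> eval M (e(x:=undefined)) a" using B by (auto simp: abs_le_iff minus_le_iff)
    also have "\<dots> \<le> (SUP c. eval M (e(x:=c)) a)" by (rule cSUP_upper[OF _ bd]) simp
    finally show "\<bar>eval M e (Sup x a)\<bar> \<le> B" using 1 by simp
  qed
next
  case (Inf x a)
  then obtain B where B: "\<forall>e. \<bar>eval M e a\<bar> \<le> B" by auto
  show ?case
  proof (intro exI allI)
    fix e
    have bd: "bdd_below (range (\<lambda>c. eval M (e(x:=c)) a))"
      using B by (intro bdd_belowI[of _ "-B"]) (auto simp: abs_le_iff minus_le_iff)
    have 1: "-B \<le> (INF c. eval M (e(x:=c)) a)"
      using B by (intro cINF_greatest) (auto simp: abs_le_iff minus_le_iff)
    have "(INF c. eval M (e(x:=c)) a) \<le> eval M (e(x:=undefined)) a" by (rule cINF_lower[OF bd]) simp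
    also have "\<dots> \<le> B" using B by (auto simp: abs_le_iff minus_le_iff)
    finally show "\<bar>eval M e (Inf x a)\<bar> \<le> B" using 1 by simp
  qed
qed

lemma bdd_eval:
  assumes "is_structure L M" "wf_fml L \<phi>"
  shows "bdd_above (range (\<lambda>c. eval M (h c) \<phi>))" "bdd_below (range (\<lambda>c. eval M (h c) \<phi>))"
proof -
  obtain B where B: "\<forall>e. \<bar>eval M e \<phi>\<bar> \<le> B" using bounded_eval[OF assms] by blast
  show "bdd_above (range (\<lambda>c. eval M (h c) \<phi>))"
    using B by (intro bdd_aboveI[of _ B]) (auto simp: abs_le_iff minus_le_iff)
  show "bdd_below (range (\<lambda>c. eval M (h c) \<phi>))"
    using B by (intro bdd_belowI[of _ "-B"]) (auto simp: abs_le_iff minus_le_iff)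
qed


definition aeq :: "('f, 'r) lang \<Rightarrow> ('a::metric_space, 'f, 'r) struc \<Rightarrow> ('b::metric_space, 'f, 'r) struc
   \<Rightarrow> (nat \<Rightarrow> 'a) \<Rightarrow> (nat \<Rightarrow> 'b) \<Rightarrow> nat set \<Rightarrow> bool" where
  "aeq L M N e e' V \<longleftrightarrow> (\<forall>\<psi>. wf_fml L \<psi> \<and> affine \<psi> \<and> fv \<psi> \<subseteq> V \<longrightarrow> eval M e \<psi> = eval N e' \<psi>)"

lemma aeq_sym: "aeq L M N e e' V \<Longrightarrow> aeq L N M e' e V"
  unfolding aeq_def by auto

lemma extend:
  fixes M :: "('a::complete_space, 'f, 'r) struc" and N :: "('b::complete_space, 'f, 'r) struc"
  assumes SM: "is_structure L M" and sat: "aleph0_saturated L N"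
    and fin: "finite V" and AE: "aeq L M N e e' V"
  shows "\<exists>d. aeq L M N (e(x:=c)) (e'(x:=d)) (insert x V)"
proof -
  define V0 where "V0 = V - {x}"
  define A where "A = e' ` V0"
  define \<Phi> where "\<Phi> = {\<psi>. wf_fml L \<psi> \<and> affine \<psi> \<and> fv \<psi> \<subseteq> insert x V}"
  define rf where "rf \<psi> = (\<lambda>b. eval N (e'(x:=b)) \<psi>)" for \<psi>
  define mv where "mv \<psi> = eval M (e(x:=c)) \<psi>" for \<psi>
  define p where "p f = (SOME r. \<exists>\<psi>\<in>\<Phi>. f = rf \<psi> \<and> r = mv \<psi>)" for f
  have AEs: "eval M e \<psi> = eval N e' \<psi>" if "wf_fml L \<psi>" "affine \<psi>" "fv \<psi> \<subseteq> V" for \<psi>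
    using AE that unfolding aeq_def by blast
  have finA: "finite A" using fin by (simp add: A_def V0_def)
  have sup_fv: "fv \<psi> - {x} \<subseteq> V" if "\<psi> \<in> \<Phi>" for \<psi> using that by (auto simp: \<Phi>_def)
  have W: "mv \<psi>1 = mv \<psi>2" if h1: "\<psi>1 \<in> \<Phi>" and h2: "\<psi>2 \<in> \<Phi>" and eq: "rf \<psi>1 = rf \<psi>2" for \<psi>1 \<psi>2
  proof -
    define ch where "ch = Plus \<psi>1 (Scal (-1) \<psi>2)"
    have ch: "ch \<in> \<Phi>" "Scal (-1) ch \<in> \<Phi>" using h1 h2 by (auto simp: \<Phi>_def ch_def)
    have z: "eval N (e'(x:=b)) ch = 0" for b
      using fun_cong[OF eq, of b] by (simp add: rf_def ch_def)
    have "eval M e (fml.Sup x ch) = eval N e' (fml.Sup x ch)"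
      using ch sup_fv[OF ch(1)] by (intro AEs) (auto simp: \<Phi>_def)
    also have "\<dots> = 0" using z by simp
    finally have s1: "(SUP a. eval M (e(x:=a)) ch) = 0" by simp
    have "eval M e (fml.Sup x (Scal (-1) ch)) = eval N e' (fml.Sup x (Scal (-1) ch))"
      using ch sup_fv[OF ch(2)] by (intro AEs) (auto simp: \<Phi>_def)
    also have "\<dots> = 0" using z by simp
    finally have s2: "(SUP a. eval M (e(x:=a)) (Scal (-1) ch)) = 0" by simp
    have wf: "wf_fml L ch" "wf_fml L (Scal (-1) ch)" using ch by (auto simp: \<Phi>_def)
    have "eval M (e(x:=c)) ch \<le> (SUP a. eval M (e(x:=a)) ch)"
      by (rule cSUP_upper[OF _ bdd_eval(1)[OF SM wf(1)]]) simp
    moreover have "eval M (e(x:=c)) (Scal (-1) ch) \<le> (SUP a. eval M (e(x:=a)) (Scal (-1) ch))"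
      by (rule cSUP_upper[OF _ bdd_eval(1)[OF SM wf(2)]]) simp
    ultimately show ?thesis using s1 s2 by (simp add: mv_def ch_def)
  qed
  have P: "0 \<le> mv \<psi>" if h: "\<psi> \<in> \<Phi>" and pos: "\<forall>b. 0 \<le> rf \<psi> b" for \<psi>
  proof -
    have "eval M e (fml.Inf x \<psi>) = eval N e' (fml.Inf x \<psi>)"
      using h sup_fv[OF h] by (intro AEs) (auto simp: \<Phi>_def)
    moreover have "0 \<le> eval N e' (fml.Inf x \<psi>)" using pos by (simp add: rf_def cINF_greatest)
    moreover have "eval M e (fml.Inf x \<psi>) \<le> mv \<psi>"
      using h by (simp add: mv_def, intro cINF_lower[OF bdd_eval(2)[OF SM]]) (auto simp: \<Phi>_def)
    ultimately show ?thesis by simp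
  qed
  have pval: "p (rf \<psi>) = mv \<psi>" if h: "\<psi> \<in> \<Phi>" for \<psi>
  proof -
    have ex: "\<exists>r. \<exists>\<psi>'\<in>\<Phi>. rf \<psi> = rf \<psi>' \<and> r = mv \<psi>'" using h by blast
    obtain \<psi>' where "\<psi>' \<in> \<Phi>" "rf \<psi> = rf \<psi>'" "p (rf \<psi>) = mv \<psi>'"
      using someI_ex[OF ex] unfolding p_def by blast
    then show ?thesis using W[OF h] by metis
  qed
  have R: "\<exists>\<psi>\<in>\<Phi>. f = rf \<psi>" if hf: "f \<in> affine_defs1 L N A" for f
  proof -
    obtain \<phi> g where f: "f = (\<lambda>b. eval N (g(0 := b)) \<phi>)" and \<phi>: "wf_fml L \<phi>" "affine \<phi>"
      and g: "\<forall>v\<in>fv \<phi>. v \<noteq> 0 \<longrightarrow> g v \<in> A"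
      using hf unfolding affine_defs1_def by blast
    define \<tau> where "\<tau> b = (SOME w. w \<in> V0 \<and> e' w = b)" for b
    have \<tau>: "\<tau> b \<in> V0 \<and> e' (\<tau> b) = b" if "b \<in> A" for b
      unfolding \<tau>_def by (rule someI_ex) (use that in \<open>auto simp: A_def\<close>)
    define \<sigma> where "\<sigma> v = (if v = 0 then x else \<tau> (g v))" for v
    have "subst \<sigma> \<phi> \<in> \<Phi>"
    proof -
      have "fv (subst \<sigma> \<phi>) \<subseteq> \<sigma> ` fv \<phi>" by (rule fv_subst)
      also have "\<dots> \<subseteq> insert x V" using g \<tau> by (auto simp: \<sigma>_def V0_def)
      finally show ?thesis using \<phi> by (simp add: \<Phi>_def wf_subst affine_subst)
    qed
    moreover have "f = rf (subst \<sigma> \<phi>)"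
    proof
      fix b
      have "rf (subst \<sigma> \<phi>) b = eval N ((e'(x:=b)) \<circ> \<sigma>) \<phi>" by (simp add: rf_def eval_subst)
      also have "\<dots> = eval N (g(0 := b)) \<phi>"
        by (rule eval_agree) (use g \<tau> in \<open>auto simp: \<sigma>_def V0_def\<close>)
      finally show "f b = rf (subst \<sigma> \<phi>) b" by (simp add: f)
    qed
    ultimately show ?thesis by blast
  qed
  have R': "rf \<psi> \<in> affine_defs1 L N A" if h: "\<psi> \<in> \<Phi>" for \<psi>
  proof -
    define \<tau> where "\<tau> v = (if v = x then 0 else Suc v)" for v
    define g where "g w = e' (w - 1)" for w
    have eqf: "(g(0:=b)) \<circ> \<tau> = e'(x:=b)" for b by (auto simp: \<tau>_def g_def)
    have "rf \<psi> = (\<lambda>b. eval N (g(0 := b)) (subst \<tau> \<psi>))"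
      by (auto simp: rf_def eval_subst eqf)
    moreover have "\<forall>v\<in>fv (subst \<tau> \<psi>). v \<noteq> 0 \<longrightarrow> g v \<in> A"
    proof (intro ballI impI)
      fix w assume w: "w \<in> fv (subst \<tau> \<psi>)" "w \<noteq> 0"
      then obtain v where v: "v \<in> fv \<psi>" "w = \<tau> v" using fv_subst by blast
      then have "v \<noteq> x" "w = Suc v" using w by (auto simp: \<tau>_def split: if_splits)
      moreover have "v \<in> V" using v h \<open>v \<noteq> x\<close> by (auto simp: \<Phi>_def)
      ultimately show "g w \<in> A" by (auto simp: g_def A_def V0_def)
    qed
    moreover have "wf_fml L (subst \<tau> \<psi>)" "affine (subst \<tau> \<psi>)"
      using h by (auto simp: \<Phi>_def wf_subst affine_subst)
    ultimately show ?thesis unfolding affine_defs1_def by blast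
  qed
  have plusP: "Plus a b \<in> \<Phi>" if "a \<in> \<Phi>" "b \<in> \<Phi>" for a b using that by (auto simp: \<Phi>_def)
  have scalP: "Scal r a \<in> \<Phi>" if "a \<in> \<Phi>" for a r using that by (auto simp: \<Phi>_def)
  have oneP: "fml.One \<in> \<Phi>" by (auto simp: \<Phi>_def)
  have htyp: "affine_type1 L N A p"
    unfolding affine_type1_def
  proof (intro conjI ballI allI impI)
    fix f g assume "f \<in> affine_defs1 L N A" "g \<in> affine_defs1 L N A"
    then obtain a b where ab: "a \<in> \<Phi>" "b \<in> \<Phi>" "f = rf a" "g = rf b" using R by metis
    have "(\<lambda>t. f t + g t) = rf (Plus a b)" using ab by (auto simp: rf_def)
    then show "p (\<lambda>t. f t + g t) = p f + p g"
      using ab pval plusP by (simp add: mv_def)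
  next
    fix f r assume "f \<in> affine_defs1 L N A"
    then obtain a where a: "a \<in> \<Phi>" "f = rf a" using R by metis
    have "(\<lambda>t. r * f t) = rf (Scal r a)" using a by (auto simp: rf_def)
    then show "p (\<lambda>t. r * f t) = r * p f"
      using a pval scalP by (simp add: mv_def)
  next
    fix f assume "f \<in> affine_defs1 L N A" "\<forall>t. 0 \<le> f t"
    then obtain a where a: "a \<in> \<Phi>" "f = rf a" using R by metis
    then show "0 \<le> p f" using P pval \<open>\<forall>t. 0 \<le> f t\<close> by simp
  next
    have "(\<lambda>t. 1) = rf fml.One" by (simp add: rf_def)
    then show "p (\<lambda>t. 1) = 1" using pval[OF oneP] by (simp add: mv_def)
  qed
  obtain d where d: "realizes1 L N A p d"
    using sat finA htyp unfolding aleph0_saturated_def by blast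
  have "aeq L M N (e(x:=c)) (e'(x:=d)) (insert x V)"
    unfolding aeq_def
  proof (intro allI impI)
    fix \<psi> assume "wf_fml L \<psi> \<and> affine \<psi> \<and> fv \<psi> \<subseteq> insert x V"
    then have h: "\<psi> \<in> \<Phi>" by (simp add: \<Phi>_def)
    have "p (rf \<psi>) = rf \<psi> d" using d R'[OF h] unfolding realizes1_def by blast
    then show "eval M (e(x:=c)) \<psi> = eval N (e'(x:=d)) \<psi>" using pval[OF h] by (simp add: mv_def rf_def)
  qed
  then show ?thesis by blast
qed


lemma CL_eq:
  fixes M :: "('a::complete_space, 'f, 'r) struc" and N :: "('b::complete_space, 'f, 'r) struc"
  assumes SM: "is_structure L M" and SN: "is_structure L N"
    and satM: "aleph0_saturated L M" and satN: "aleph0_saturated L N"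
  shows "finite V \<Longrightarrow> aeq L M N e e' V \<Longrightarrow> wf_fml L \<phi> \<Longrightarrow> fv \<phi> \<subseteq> V \<Longrightarrow> eval M e \<phi> = eval N e' \<phi>"
proof (induction \<phi> arbitrary: V e e')
  case One then show ?case by simp
next
  case (Dist s t) then show ?case unfolding aeq_def by (metis Defs.affine.simps(2))
next
  case (Rel R ts) then show ?case unfolding aeq_def by (metis Defs.affine.simps(3))
next
  case (Plus a b) then show ?case by auto
next
  case (Scal r a) then show ?case by auto
next
  case (Min a b) then show ?case by auto
next
  case (Max a b) then show ?case by auto
next
  case (Sup x \<phi>)
  have fin: "finite (insert x V)" using Sup.prems by simp
  have wf: "wf_fml L \<phi>" and fvs: "fv \<phi> \<subseteq> insert x V" using Sup.prems by auto
  have 1: "\<exists>d. eval M (e(x:=c)) \<phi> = eval N (e'(x:=d)) \<phi>" for c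
  proof -
    obtain d where "aeq L M N (e(x:=c)) (e'(x:=d)) (insert x V)"
      using extend[OF SM satN Sup.prems(1) Sup.prems(2)] by blast
    then show ?thesis using Sup.IH[OF fin _ wf fvs] by blast
  qed
  have 2: "\<exists>c. eval M (e(x:=c)) \<phi> = eval N (e'(x:=d)) \<phi>" for d
  proof -
    obtain c where "aeq L N M (e'(x:=d)) (e(x:=c)) (insert x V)"
      using extend[OF SN satM Sup.prems(1) aeq_sym[OF Sup.prems(2)]] by blast
    then show ?thesis using Sup.IH[OF fin aeq_sym wf fvs] by blast
  qed
  have "(SUP c. eval M (e(x:=c)) \<phi>) \<le> (SUP d. eval N (e'(x:=d)) \<phi>)"
  proof (rule cSUP_least)
    fix c
    obtain d where "eval M (e(x:=c)) \<phi> = eval N (e'(x:=d)) \<phi>" using 1 by blast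
    then show "eval M (e(x:=c)) \<phi> \<le> (SUP d. eval N (e'(x:=d)) \<phi>)"
      by (metis UNIV_I cSUP_upper bdd_eval(1)[OF SN wf])
  qed simp
  moreover have "(SUP d. eval N (e'(x:=d)) \<phi>) \<le> (SUP c. eval M (e(x:=c)) \<phi>)"
  proof (rule cSUP_least)
    fix d
    obtain c where "eval M (e(x:=c)) \<phi> = eval N (e'(x:=d)) \<phi>" using 2 by blast
    then show "eval N (e'(x:=d)) \<phi> \<le> (SUP c. eval M (e(x:=c)) \<phi>)"
      by (metis UNIV_I cSUP_upper bdd_eval(1)[OF SM wf])
  qed simp
  ultimately show ?case by simp
next
  case (Inf x \<phi>)
  have fin: "finite (insert x V)" using Inf.prems by simp
  have wf: "wf_fml L \<phi>" and fvs: "fv \<phi> \<subseteq> insert x V" using Inf.prems by auto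
  have 1: "\<exists>d. eval M (e(x:=c)) \<phi> = eval N (e'(x:=d)) \<phi>" for c
  proof -
    obtain d where "aeq L M N (e(x:=c)) (e'(x:=d)) (insert x V)"
      using extend[OF SM satN Inf.prems(1) Inf.prems(2)] by blast
    then show ?thesis using Inf.IH[OF fin _ wf fvs] by blast
  qed
  have 2: "\<exists>c. eval M (e(x:=c)) \<phi> = eval N (e'(x:=d)) \<phi>" for d
  proof -
    obtain c where "aeq L N M (e'(x:=d)) (e(x:=c)) (insert x V)"
      using extend[OF SN satM Inf.prems(1) aeq_sym[OF Inf.prems(2)]] by blast
    then show ?thesis using Inf.IH[OF fin aeq_sym wf fvs] by blast
  qed
  have "(INF c. eval M (e(x:=c)) \<phi>) \<ge> (INF d. eval N (e'(x:=d)) \<phi>)"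
  proof (rule cINF_greatest)
    fix c
    obtain d where "eval M (e(x:=c)) \<phi> = eval N (e'(x:=d)) \<phi>" using 1 by blast
    then show "eval M (e(x:=c)) \<phi> \<ge> (INF d. eval N (e'(x:=d)) \<phi>)"
      by (metis UNIV_I cINF_lower bdd_eval(2)[OF SN wf])
  qed simp
  moreover have "(INF d. eval N (e'(x:=d)) \<phi>) \<ge> (INF c. eval M (e(x:=c)) \<phi>)"
  proof (rule cINF_greatest)
    fix d
    obtain c where "eval M (e(x:=c)) \<phi> = eval N (e'(x:=d)) \<phi>" using 2 by blast
    then show "eval N (e'(x:=d)) \<phi> \<ge> (INF c. eval M (e(x:=c)) \<phi>)"
      by (metis UNIV_I cINF_lower bdd_eval(2)[OF SM wf])
  qed simp
  ultimately show ?case by simp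
qed

theorem mainTheorem12:
  fixes L :: "('f, 'r) lang"
    and M :: "('a::complete_space, 'f, 'r) struc"
    and N :: "('b::complete_space, 'f, 'r) struc"
  assumes "is_structure L M" and "is_structure L N"
    and "affine_equiv L M N"
    and "aleph0_saturated L M" and "aleph0_saturated L N"
  shows "CL_equiv L M N"
  unfolding CL_equiv_def
proof (intro allI impI)
  fix \<sigma> assume s: "sentence L \<sigma>"
  have a: "aeq L M N (\<lambda>_. undefined) (\<lambda>_. undefined) {}"
    using assms(3) unfolding aeq_def affine_equiv_def sentence_def sval_def by auto
  show "sval M \<sigma> = sval N \<sigma>"
    using CL_eq[OF assms(1,2,4,5) _ a] s unfolding sentence_def sval_def by simp
qed

end
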